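(* Let $p$ be an odd prime and let $B$ be the $p\times p$ matrix over $\mathbb{F}_p$ with rows and columns indexed by $0,1,\dots,p-1$, defined by $B(s,s)=0$ and $B(s,t)=(s-t)^{-1}$ for $s\neq t$. Then $\operatorname{rank}(B)=p-1$. *)

theory Defs
  imports "Jordan_Normal_Form.DL_Rank" "Berlekamp_Zassenhaus.Finite_Field"
begin

definition inv_diff_mat :: "'p::prime_card mod_ring mat" where
  "inv_diff_mat = mat CARD('p) CARD('p)
     (\<lambda>(s, t). if s = t then 0 else inverse (of_nat s - of_nat t))"

end

theory Submission
  imports Defs
begin

lemma of_nat_K_eq: "i < CARD('p) \<Longrightarrow> j < CARD('p) \<Longrightarrow>
   (of_nat i :: 'p::prime_card mod_ring) = of_nat j \<longleftrightarrow> i = j"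
  by (metis of_nat_eq_iff_cong_CHAR semiring_char_mod_ring cong_less_modulus_unique_nat)

lemma of_nat_K_0: "0 < i \<Longrightarrow> i < CARD('p) \<Longrightarrow> (of_nat i :: 'p::prime_card mod_ring) \<noteq> 0"
proof
  assume "0 < i" "i < CARD('p)" "(of_nat i :: 'p mod_ring) = 0"
  hence "CARD('p) dvd i" using of_nat_0_mod_ring_dvd by blast
  hence "CARD('p) \<le> i" using \<open>0 < i\<close> by (rule dvd_imp_le)
  thus False using \<open>i < CARD('p)\<close> by simp
qed

lemma sum_K: "(\<Sum>t<CARD('p). f (of_nat t :: 'p::prime_card mod_ring)) = (\<Sum>x\<in>UNIV. f x)"
proof -
  have inj: "inj_on (of_nat :: nat \<Rightarrow> 'p mod_ring) {..<CARD('p)}"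
    by (auto simp: inj_on_def of_nat_K_eq)
  have im: "(of_nat :: nat \<Rightarrow> 'p mod_ring) ` {..<CARD('p)} = UNIV"
    using surj_of_nat_mod_ring by fastforce
  show ?thesis using sum.reindex[OF inj, of f] im by simp
qed

lemma exists_nonroot:
  assumes "0 < k" "k < CARD('p) - 1"
  shows "\<exists>c :: 'p::prime_card mod_ring. c \<noteq> 0 \<and> c ^ k \<noteq> 1"
proof (rule ccontr)
  assume "\<not> ?thesis"
  hence all: "\<And>c :: 'p mod_ring. c \<noteq> 0 \<Longrightarrow> c ^ k = 1" by blast
  define q :: "'p mod_ring poly" where "q = Polynomial.monom 1 k + [:-1:]"
  have dq: "degree q = k" unfolding q_def using assms
    by (subst degree_add_eq_left) (auto simp: degree_monom_eq)
  hence q0: "q \<noteq> 0" using assms by auto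
  have "UNIV - {0} \<subseteq> {x. poly q x = 0}"
    using all by (auto simp: q_def poly_monom)
  hence "card (UNIV - {0 :: 'p mod_ring}) \<le> card {x. poly q x = 0}"
    by (intro card_mono poly_roots_finite q0)
  also have "\<dots> \<le> k" using card_poly_roots_bound[OF q0] dq by simp
  finally show False using assms by (simp add: card_Diff_singleton)
qed

lemma psum:
  assumes "0 < k" "k < CARD('p) - 1"
  shows "(\<Sum>x\<in>(UNIV :: 'p::prime_card mod_ring set). x ^ k) = 0"
proof -
  obtain c :: "'p mod_ring" where c: "c \<noteq> 0" "c ^ k \<noteq> 1" using exists_nonroot assms by blast
  have inj: "inj ((*) c)" using c by (auto simp: inj_on_def)
  have "(\<Sum>x\<in>UNIV. x ^ k) = (\<Sum>x\<in>UNIV. (c * x) ^ k)"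
    using sum.reindex[OF inj, of "\<lambda>x. x ^ k"] finite_UNIV_inj_surj[OF _ inj] by simp
  also have "\<dots> = c ^ k * (\<Sum>x\<in>UNIV. x ^ k)" by (simp add: power_mult_distrib sum_distrib_left)
  finally have "(1 - c ^ k) * (\<Sum>x\<in>UNIV. x ^ k) = 0" by (simp add: algebra_simps)
  thus ?thesis using c by simp
qed

lemma psum':
  assumes "k < CARD('p) - 1"
  shows "(\<Sum>x\<in>(UNIV :: 'p::prime_card mod_ring set). x ^ k) = 0"
  using psum[OF _ assms] by (cases "k = 0") auto

lemma inv_sum:
  assumes "CARD('p::prime_card) \<noteq> 2"
  shows "(\<Sum>x\<in>(UNIV :: 'p mod_ring set). inverse (a - x)) = 0"
proof -
  have p2: "2 \<le> CARD('p)" by (rule prime_ge_2_nat[OF prime_card])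
  have p: "1 < CARD('p) - 1" using p2 assms by linarith
  have "(\<Sum>x\<in>(UNIV :: 'p mod_ring set). inverse (a - x)) = (\<Sum>x\<in>UNIV. inverse x)"
    by (rule sum.reindex_bij_witness[of _ "\<lambda>x. a - x" "\<lambda>x. a - x"]) auto
  also have "\<dots> = (\<Sum>x\<in>UNIV. x ^ 1)"
    by (rule sum.reindex_bij_witness[of _ inverse inverse]) auto
  also have "\<dots> = 0" by (rule psum[OF _ p]) simp
  finally show ?thesis .
qed

lemma key:
  assumes "CARD('p::prime_card) \<noteq> 2" "j < CARD('p)"
  shows "(\<Sum>x\<in>(UNIV :: 'p mod_ring set). inverse (a - x) * x ^ j) = of_nat j * a ^ (j - 1)"
proof -
  define S where "S x = (\<Sum>i<j. x ^ (j - Suc i) * a ^ i)" for x :: "'p mod_ring"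
  have pt: "inverse (a - x) * x ^ j = inverse (a - x) * a ^ j - S x + (if x = a then S a else 0)" for x
  proof (cases "x = a")
    case False
    have "a ^ j - x ^ j = (a - x) * S x" unfolding S_def by (rule power_diff_sumr2)
    hence "x ^ j = a ^ j - (a - x) * S x" by (simp add: algebra_simps)
    hence "inverse (a - x) * x ^ j = inverse (a - x) * a ^ j - (inverse (a - x) * (a - x)) * S x"
      by (simp add: right_diff_distrib mult.assoc)
    thus ?thesis using False by simp
  qed simp
  have s1: "(\<Sum>x\<in>UNIV. inverse (a - x) * a ^ j) = 0"
    using inv_sum[OF assms(1), of a] by (simp add: sum_distrib_right[symmetric])
  have s2: "(\<Sum>x\<in>UNIV. S x) = 0"
  proof -
    have "(\<Sum>x\<in>UNIV. S x) = (\<Sum>i<j. a ^ i * (\<Sum>x\<in>UNIV. x ^ (j - Suc i)))"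
      unfolding S_def by (subst sum.swap) (simp add: sum_distrib_left mult.commute)
    also have "\<dots> = 0"
      by (rule sum.neutral) (use assms(2) psum'[where 'p='p] in auto)
    finally show ?thesis .
  qed
  have s3: "S a = of_nat j * a ^ (j - 1)"
  proof -
    have "S a = (\<Sum>i<j. a ^ (j - 1))" unfolding S_def
      by (rule sum.cong) (auto simp: power_add[symmetric])
    thus ?thesis by simp
  qed
  have "(\<Sum>x\<in>UNIV. inverse (a - x) * x ^ j)
      = (\<Sum>x\<in>UNIV. inverse (a - x) * a ^ j) - (\<Sum>x\<in>UNIV. S x) + (\<Sum>x\<in>UNIV. if x = a then S a else 0)"
    by (simp add: pt sum.distrib sum_subtractf)
  also have "\<dots> = S a" using s1 s2 by simp
  finally show ?thesis using s3 by simp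
qed

lemma B_entry:
  assumes "s < CARD('p)" "t < CARD('p)"
  shows "(inv_diff_mat :: 'p::prime_card mod_ring mat) $$ (s, t) = inverse (of_nat s - of_nat t)"
  using assms unfolding inv_diff_mat_def by auto

lemma B_carrier: "(inv_diff_mat :: 'p::prime_card mod_ring mat) \<in> carrier_mat CARD('p) CARD('p)"
  unfolding inv_diff_mat_def by simp

lemma det_B:
  assumes "CARD('p::prime_card) \<noteq> 2"
  shows "det (inv_diff_mat :: 'p mod_ring mat) = 0"
proof -
  let ?n = "CARD('p)"
  let ?B = "inv_diff_mat :: 'p mod_ring mat"
  define v :: "'p mod_ring vec" where "v = vec ?n (\<lambda>_. 1)"
  have "?B *\<^sub>v v = 0\<^sub>v ?n"
  proof (rule eq_vecI)
    fix s assume "s < dim_vec (0\<^sub>v ?n :: 'p mod_ring vec)"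
    hence s: "s < ?n" by simp
    have "(?B *\<^sub>v v) $ s = (\<Sum>t<?n. ?B $$ (s, t) * 1)"
      using s B_carrier[where 'p='p]
      by (simp add: v_def scalar_prod_def atLeast0LessThan)
    also have "\<dots> = (\<Sum>t<?n. inverse (of_nat s - of_nat t :: 'p mod_ring))"
      by (rule sum.cong) (auto simp: B_entry s)
    also have "\<dots> = (\<Sum>x\<in>UNIV. inverse (of_nat s - x :: 'p mod_ring))"
      by (rule sum_K)
    also have "\<dots> = 0" by (rule inv_sum[OF assms])
    finally show "(?B *\<^sub>v v) $ s = 0\<^sub>v ?n $ s" using s by simp
  qed (use B_carrier[where 'p='p] in simp)
  moreover have "v \<noteq> 0\<^sub>v ?n"
  proof
    assume "v = 0\<^sub>v ?n"
    hence "v $ 0 = 0\<^sub>v ?n $ 0" by simp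
    thus False by (simp add: v_def)
  qed
  moreover have "v \<in> carrier_vec ?n" by (simp add: v_def)
  ultimately show ?thesis
    using det_0_iff_vec_prod_zero_field[OF B_carrier] by blast
qed

definition Vm :: "'p::prime_card mod_ring mat" where
  "Vm = mat CARD('p) CARD('p) (\<lambda>(s, j). (of_nat s) ^ j)"

definition Cm :: "'p::prime_card mod_ring mat" where
  "Cm = mat CARD('p) CARD('p) (\<lambda>(s, t). if t = 0 then (of_nat s) ^ (CARD('p) - 1) else 0)"

definition Fm :: "'p::prime_card mod_ring mat" where
  "Fm = mat CARD('p) CARD('p) (\<lambda>(i, j). if j = Suc i then of_nat j
          else if i = CARD('p) - 1 \<and> j = 0 then 1 else 0)"

lemma det_Vm: "det (Vm :: 'p::prime_card mod_ring mat) \<noteq> 0"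
proof
  let ?n = "CARD('p)"
  assume "det (Vm :: 'p mod_ring mat) = 0"
  then obtain c :: "'p mod_ring vec" where c: "c \<in> carrier_vec ?n" "c \<noteq> 0\<^sub>v ?n" "Vm *\<^sub>v c = 0\<^sub>v ?n"
    using det_0_iff_vec_prod_zero_field[of "Vm :: 'p mod_ring mat" ?n] by (auto simp: Vm_def)
  define Q where "Q = (\<Sum>j<?n. Polynomial.monom (c $ j) j)"
  have coeffQ: "Polynomial.coeff Q k = (if k < ?n then c $ k else 0)" for k
    unfolding Q_def by (simp add: coeff_sum coeff_monom)
  have polyQ: "poly Q x = (\<Sum>j<?n. c $ j * x ^ j)" for x
    unfolding Q_def by (simp add: poly_sum poly_monom)
  have roots: "poly Q x = 0" for x
  proof -
    obtain s where s: "s < ?n" "x = of_nat s" using surj_of_nat_mod_ring by blast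
    have "(Vm *\<^sub>v c) $ s = 0" using c(3) s by simp
    moreover have "(Vm *\<^sub>v c) $ s = (\<Sum>j<?n. (of_nat s) ^ j * c $ j)"
      using s c(1) by (simp add: Vm_def scalar_prod_def atLeast0LessThan)
    ultimately show ?thesis using s by (simp add: polyQ mult.commute)
  qed
  have "Q = 0"
  proof (rule ccontr)
    assume Q0: "Q \<noteq> 0"
    have "degree Q \<le> ?n - 1"
      by (rule degree_le) (auto simp: coeffQ)
    moreover have "card {x. poly Q x = 0} \<le> degree Q" by (rule card_poly_roots_bound[OF Q0])
    moreover have "{x. poly Q x = 0} = UNIV" using roots by auto
    moreover have "0 < ?n" using prime_gt_0_nat[OF prime_card[where 'a='p]] .
    ultimately show False by simp
  qed
  hence "c $ k = 0" if "k < ?n" for k using coeffQ[of k] that by simp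
  hence "c = 0\<^sub>v ?n" using c(1) by (intro eq_vecI) auto
  thus False using c(2) by simp
qed

lemma det_Fm: "det (Fm :: 'p::prime_card mod_ring mat) \<noteq> 0"
proof
  let ?n = "CARD('p)"
  assume "det (Fm :: 'p mod_ring mat) = 0"
  then obtain w :: "'p mod_ring vec" where w: "w \<in> carrier_vec ?n" "w \<noteq> 0\<^sub>v ?n" "Fm *\<^sub>v w = 0\<^sub>v ?n"
    using det_0_iff_vec_prod_zero_field[of "Fm :: 'p mod_ring mat" ?n] by (auto simp: Fm_def)
  have n0: "0 < ?n" using prime_card[where 'a='p] prime_gt_0_nat by blast
  have row: "(Fm *\<^sub>v w) $ i = (\<Sum>k<?n. (if k = Suc i then of_nat k
          else if i = ?n - 1 \<and> k = 0 then 1 else 0) * w $ k)" if "i < ?n" for i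
    using that w(1) by (simp add: Fm_def scalar_prod_def atLeast0LessThan)
  have w0: "w $ 0 = 0"
  proof -
    have "(Fm *\<^sub>v w) $ (?n - 1) = (\<Sum>k<?n. (if k = Suc (?n - 1) then of_nat k
          else if ?n - 1 = ?n - 1 \<and> k = 0 then 1 else 0) * w $ k)"
      using row[of "?n - 1"] n0 by simp
    also have "\<dots> = (\<Sum>k<?n. (if k = 0 then w $ k else 0))"
      using n0 by (intro sum.cong) auto
    also have "\<dots> = w $ 0" using n0 by simp
    finally show ?thesis using w(3) n0 by simp
  qed
  have wS: "w $ Suc i = 0" if "Suc i < ?n" for i
  proof -
    have "(Fm *\<^sub>v w) $ i = (\<Sum>k<?n. (if k = Suc i then of_nat k
          else if i = ?n - 1 \<and> k = 0 then 1 else 0) * w $ k)"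
      using row[of i] that by simp
    also have "\<dots> = (\<Sum>k<?n. (if k = Suc i then of_nat (Suc i) * w $ k else 0))"
      by (rule sum.cong[OF refl]) (use that in auto)
    also have "\<dots> = of_nat (Suc i) * w $ Suc i" using that by simp
    finally have "of_nat (Suc i) * w $ Suc i = 0" using w(3) that by simp
    moreover have "(of_nat (Suc i) :: 'p mod_ring) \<noteq> 0" using of_nat_K_0 that by blast
    ultimately show ?thesis by simp
  qed
  have "w = 0\<^sub>v ?n" using w(1)
    by (intro eq_vecI) (auto simp: w0 wS elim: less_SucE, metis not0_implies_Suc w0 wS)
  thus False using w(2) by simp
qed

lemma GV_entry:
  assumes "CARD('p::prime_card) \<noteq> 2" and s: "s < CARD('p)" and j: "j < CARD('p)"
  shows "((inv_diff_mat + Cm) * Vm) $$ (s, j) = ((Vm * Fm) $$ (s, j) :: 'p mod_ring)"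
proof -
  let ?n = "CARD('p)"
  let ?a = "of_nat s :: 'p mod_ring"
  have L: "((inv_diff_mat + Cm) * Vm) $$ (s, j) =
     (\<Sum>t<?n. (inverse (?a - of_nat t) + (if t = 0 then ?a ^ (?n - 1) else 0)) * (of_nat t) ^ j)"
    using s j by (auto simp: Vm_def Cm_def scalar_prod_def atLeast0LessThan B_entry inv_diff_mat_def
       intro!: sum.cong)
  also have "\<dots> = (\<Sum>t<?n. inverse (?a - of_nat t) * (of_nat t) ^ j
      + (if t = 0 then ?a ^ (?n - 1) * (of_nat t) ^ j else 0))"
    by (intro sum.cong) (auto simp: distrib_right)
  also have "\<dots> = (\<Sum>t<?n. inverse (?a - of_nat t) * (of_nat t) ^ j)
      + (\<Sum>t<?n. (if t = 0 then ?a ^ (?n - 1) * (of_nat t) ^ j else 0))"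
    by (rule sum.distrib)
  also have "\<dots> = of_nat j * ?a ^ (j - 1) + ?a ^ (?n - 1) * 0 ^ j"
    using key[OF assms(1) j, of ?a] sum_K[of "\<lambda>x. inverse (?a - x) * x ^ j"] s by simp
  finally have L: "((inv_diff_mat + Cm) * Vm) $$ (s, j) = of_nat j * ?a ^ (j - 1) + ?a ^ (?n - 1) * 0 ^ j" .
  have R: "(Vm * Fm) $$ (s, j) = (\<Sum>k<?n. ?a ^ k * (if j = Suc k then of_nat j
          else if k = ?n - 1 \<and> j = 0 then 1 else 0))"
    using s j by (auto simp: Vm_def Fm_def scalar_prod_def atLeast0LessThan intro!: sum.cong)
  show ?thesis
  proof (cases j)
    case 0
    have "(Vm * Fm) $$ (s, j) = (\<Sum>k<?n. if k = ?n - 1 then ?a ^ (?n - 1) else 0)"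
      unfolding R using 0 by (intro sum.cong[OF refl]) auto
    also have "\<dots> = ?a ^ (?n - 1)" using s by simp
    finally have R0: "(Vm * Fm) $$ (s, j) = ?a ^ (?n - 1)" .
    have L0: "((inv_diff_mat + Cm) * Vm) $$ (s, j) = ?a ^ (?n - 1)" using L 0 by simp
    show ?thesis using L0 R0 by simp
  next
    case (Suc m)
    have "(Vm * Fm) $$ (s, j) = (\<Sum>k<?n. if k = m then ?a ^ m * of_nat j else 0)"
      unfolding R using Suc by (intro sum.cong[OF refl]) auto
    also have "\<dots> = ?a ^ m * of_nat j" using j Suc by simp
    finally show ?thesis using L Suc by (simp add: mult.commute)
  qed
qed

lemma GV:
  assumes "CARD('p::prime_card) \<noteq> 2"
  shows "(inv_diff_mat + Cm) * Vm = Vm * (Fm :: 'p mod_ring mat)"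
proof (rule eq_matI)
  fix i j assume "i < dim_row (Vm * (Fm :: 'p mod_ring mat))" "j < dim_col (Vm * (Fm :: 'p mod_ring mat))"
  hence "i < CARD('p)" "j < CARD('p)" by (simp_all add: Vm_def Fm_def)
  thus "((inv_diff_mat + Cm) * Vm) $$ (i, j) = (Vm * (Fm :: 'p mod_ring mat)) $$ (i, j)"
    by (rule GV_entry[OF assms])
qed (simp_all add: Vm_def Fm_def Cm_def inv_diff_mat_def)

theorem lemma2p11:
  assumes "CARD('p::prime_card) \<noteq> 2"
  shows "vec_space.rank CARD('p) (inv_diff_mat :: 'p mod_ring mat) = CARD('p) - 1"
proof -
  let ?n = "CARD('p)"
  let ?B = "inv_diff_mat :: 'p mod_ring mat"
  have Bc: "?B \<in> carrier_mat ?n ?n" by (rule B_carrier)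
  have Cc: "(Cm :: 'p mod_ring mat) \<in> carrier_mat ?n ?n" by (simp add: Cm_def)
  have Vc: "(Vm :: 'p mod_ring mat) \<in> carrier_mat ?n ?n" by (simp add: Vm_def)
  have Fc: "(Fm :: 'p mod_ring mat) \<in> carrier_mat ?n ?n" by (simp add: Fm_def)
  have BCc: "?B + Cm \<in> carrier_mat ?n ?n" using Bc Cc by simp
  have r1: "vec_space.rank ?n ?B < ?n"
    by (rule vec_space.det_zero_low_rank[OF Bc det_B[OF assms]])
  have "det (?B + Cm) * det Vm = det ((?B + Cm) * Vm)" using det_mult[OF BCc Vc] by simp
  also have "\<dots> = det (Vm * Fm)" using GV[OF assms] by simp
  also have "\<dots> = det Vm * det (Fm :: 'p mod_ring mat)" using det_mult[OF Vc Fc] .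
  finally have eq: "det (?B + Cm) * det Vm = det Vm * det (Fm :: 'p mod_ring mat)" .
  have "det Vm * det (Fm :: 'p mod_ring mat) \<noteq> 0" using det_Vm[where 'p='p] det_Fm[where 'p='p] by simp
  hence "det (?B + Cm) * det Vm \<noteq> 0" using eq by simp
  hence "det (?B + Cm) \<noteq> 0" by auto
  hence r2: "vec_space.rank ?n (?B + Cm) = ?n"
    by (rule vec_space.low_rank_det_zero[OF BCc])
  have r3: "vec_space.rank ?n (?B + Cm) \<le> vec_space.rank ?n ?B + vec_space.rank ?n (Cm :: 'p mod_ring mat)"
    by (rule vec_space.rank_subadditive[OF Bc Cc])
  have r4: "vec_space.rank ?n (Cm :: 'p mod_ring mat) \<le> 1"
    by (rule vec_space.rank_le_1_product_entries[OF Cc,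
          of "\<lambda>r. (of_nat r) ^ (?n - 1)" "\<lambda>c. if c = 0 then 1 else 0"])
       (auto simp: Cm_def)
  show ?thesis using r1 r2 r3 r4 by linarith
qed

end
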